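(* Let $\mathbf a=\{a_k\}_{k\ge0}$ with $\operatorname{Im}a_k>0$ and let $f\in L_1(\mathbb R)$. Then for every integer $n\ge0$ and every $x\in\mathbb R$, $$S_n(f;\mathbf a;x)=\frac1\pi\int_0^\infty f(x-y)\,\frac{\sin\big(y\,\mu_n(-y;x)\big)}{y}\,dy+\frac1\pi\int_0^\infty f(x+y)\,\frac{\sin\big(y\,\mu_n(y;x)\big)}{y}\,dy .$$
   Context: Let $\Phi_n^+$ ($n\ge0$) be built from $\mathbf a$ and $\Phi_n^-$ ($n\ge1$) from $b_k:=\overline{a_{k-1}}$ ($k\ge1$) as follows: $\chi_k^+:=\frac{|1+a_k^2|}{1+a_k^2}$, $B_0^+:=1$, $B_n^+(z):=\prod_{k=0}^{n-1}\chi_k^+\frac{z-a_k}{z-\overline{a_k}}$, $\Phi_n^+(z):=\frac{\sqrt{\operatorname{Im}a_n}}{z-\overline{a_n}}B_n^+(z)$; $\chi_k^-:=\frac{|1+b_k^2|}{1+b_k^2}$, $B_1^-:=1$, $B_n^-(z):=\prod_{k=1}^{n-1}\chi_k^-\frac{z-b_k}{z-\overline{b_k}}$, $\Phi_n^-(z):=\frac{\sqrt{-\operatorname{Im}b_n}}{z-\overline{b_n}}B_n^-(z)$ (unimodular constants $\chi$ taken to be $1$ if the denominator vanishes); $\Phi_n:=\Phi_n^+$ for $n\ge0$, $\Phi_n:=\Phi_{-n}^-$ for $n\le-1$. For integrable $f$ let $c_k:=\frac1\pi\int_{-\infty}^\infty f(t)\overline{\Phi_k(t)}\,dt$ and $S_n(f;\mathbf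 a;x):=\sum_{k=-n}^{n-1}c_k\Phi_k(x)$. For $y\ne0$, $x\in\mathbb R$: $\mu_n(y;x):=\frac1y\int_x^{x+y}\sum_{k=0}^{n-1}\frac{2\operatorname{Im}a_k}{(u-\operatorname{Re}a_k)^2+(\operatorname{Im}a_k)^2}\,du$. *)

theory Defs
  imports "HOL-Analysis.Analysis"
begin

definition chi :: "complex \<Rightarrow> complex" where
  "chi w = (if 1 + w\<^sup>2 = 0 then 1 else complex_of_real (cmod (1 + w\<^sup>2)) / (1 + w\<^sup>2))"

definition bseq :: "(nat \<Rightarrow> complex) \<Rightarrow> nat \<Rightarrow> complex" where
  "bseq a k = cnj (a (k - 1))"

definition Bplus :: "(nat \<Rightarrow> complex) \<Rightarrow> nat \<Rightarrow> complex \<Rightarrow> complex" where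
  "Bplus a n z = (\<Prod>k<n. chi (a k) * (z - a k) / (z - cnj (a k)))"

definition Phiplus :: "(nat \<Rightarrow> complex) \<Rightarrow> nat \<Rightarrow> complex \<Rightarrow> complex" where
  "Phiplus a n z = complex_of_real (sqrt (Im (a n))) / (z - cnj (a n)) * Bplus a n z"

definition Bminus :: "(nat \<Rightarrow> complex) \<Rightarrow> nat \<Rightarrow> complex \<Rightarrow> complex" where
  "Bminus a n z = (\<Prod>k\<in>{1..<n}. chi (bseq a k) * (z - bseq a k) / (z - cnj (bseq a k)))"

definition Phiminus :: "(nat \<Rightarrow> complex) \<Rightarrow> nat \<Rightarrow> complex \<Rightarrow> complex" where
  "Phiminus a n z = complex_of_real (sqrt (- Im (bseq a n))) / (z - cnj (bseq a n)) * Bminus a n z"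

definition Phi :: "(nat \<Rightarrow> complex) \<Rightarrow> int \<Rightarrow> complex \<Rightarrow> complex" where
  "Phi a k z = (if k \<ge> 0 then Phiplus a (nat k) z else Phiminus a (nat (- k)) z)"

definition coeff_c :: "(nat \<Rightarrow> complex) \<Rightarrow> (real \<Rightarrow> complex) \<Rightarrow> int \<Rightarrow> complex" where
  "coeff_c a f k = complex_of_real (1 / pi) *
     integral\<^sup>L lborel (\<lambda>t. f t * cnj (Phi a k (complex_of_real t)))"

definition Sn :: "(real \<Rightarrow> complex) \<Rightarrow> (nat \<Rightarrow> complex) \<Rightarrow> nat \<Rightarrow> real \<Rightarrow> complex" where
  "Sn f a n x = (\<Sum>k\<in>{- int n..int n - 1}. coeff_c a f k * Phi a k (complex_of_real x))"

text \<open>mu_n(y;x) = (1/y) \<integral>_x^{x+y} \<Sum>_{k<n} 2 Im a_k / ((u - Re a_k)^2 + (Im a_k)^2) du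
  (oriented integral, so negative y is handled as usual).\<close>
definition mu :: "(nat \<Rightarrow> complex) \<Rightarrow> nat \<Rightarrow> real \<Rightarrow> real \<Rightarrow> real" where
  "mu a n y x = (1 / y) * (LBINT u=ereal x..ereal (x + y).
      (\<Sum>k<n. 2 * Im (a k) / ((u - Re (a k))\<^sup>2 + (Im (a k))\<^sup>2)))"

end

theory Submission
  imports Defs
begin


lemma chi_cnj_mult: "chi w * cnj (chi w) = 1"
proof (cases "1 + w\<^sup>2 = 0")
  case True then show ?thesis by (simp add: chi_def)
next
  case False
  define d where "d = 1 + w\<^sup>2"
  have dn: "d \<noteq> 0" using False d_def by simp
  have "chi w = of_real (cmod d) / d" using False by (simp add: chi_def d_def)
  then have "chi w * cnj (chi w) = of_real ((cmod d)\<^sup>2) / (d * cnj d)"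
    by (simp add: power2_eq_square)
  also have "\<dots> = 1" using dn by (simp add: complex_norm_square[symmetric])
  finally show ?thesis .
qed

lemma chi_cnj: "chi (cnj w) = cnj (chi w)"
proof -
  have e: "1 + (cnj w)\<^sup>2 = cnj (1 + w\<^sup>2)" by simp
  show ?thesis unfolding chi_def e by (simp del: complex_cnj_add complex_cnj_one complex_cnj_power)
qed

lemma den_nz: assumes "Im a > 0" shows "complex_of_real u - cnj a \<noteq> 0" "complex_of_real u - a \<noteq> 0"
  using assms by (auto simp: complex_eq_iff)

lemma Bplus_unit:
  assumes "\<And>k. Im (a k) > 0"
  shows "Bplus a n (of_real u) * cnj (Bplus a n (of_real u)) = 1"
proof (induction n)
  case 0 then show ?case by (simp add: Bplus_def)
next
  case (Suc n)
  have B: "Bplus a (Suc n) z = Bplus a n z * (chi (a n) * (z - a n) / (z - cnj (a n)))" for z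
    by (simp add: Bplus_def)
  have d1: "complex_of_real u - cnj (a n) \<noteq> 0" "complex_of_real u - a n \<noteq> 0" using den_nz assms by auto
  have c: "chi (a n) * cnj (chi (a n)) = 1" by (rule chi_cnj_mult)
  define z where "z = complex_of_real u"
  have "Bplus a (Suc n) z * cnj (Bplus a (Suc n) z) =
     (Bplus a n z * cnj (Bplus a n z)) * (chi (a n) * cnj (chi (a n))) *
     ((z - a n) * (z - cnj (a n))) / ((z - cnj (a n)) * (z - a n))"
    unfolding B by (simp add: z_def field_simps)
  also have "\<dots> = 1" using Suc d1 c by (simp add: z_def)
  finally show ?case by (simp add: z_def)
qed

lemma Bminus_eq:
  shows "Bminus a (Suc n) (of_real u) = cnj (Bplus a n (of_real u))"
proof (induction n)
  case 0 then show ?case by (simp add: Bplus_def Bminus_def)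
next
  case (Suc n)
  have "Bminus a (Suc (Suc n)) z = Bminus a (Suc n) z * (chi (bseq a (Suc n)) * (z - bseq a (Suc n)) / (z - cnj (bseq a (Suc n))))" for z
    unfolding Bminus_def by (simp add: prod.atLeastLessThan_Suc)
  then show ?case using Suc by (simp add: Bplus_def bseq_def chi_cnj)
qed



lemma key_alg:
  fixes Bt Bx Ct Cx s a T X :: complex and b :: real
  assumes s: "s * s = of_real b" and ab: "a - cnj a = 2 * \<i> * of_real b"
    and n1: "T - a \<noteq> 0" "T - cnj a \<noteq> 0" "X - a \<noteq> 0" "X - cnj a \<noteq> 0"
  shows "(T - X) * ((s / (T - a)) * Ct * (s / (X - cnj a)) * Bx + (s / (T - cnj a)) * Bt * (s / (X - a)) * Cx)
     = (Bt * Cx * ((T - a) * (X - cnj a) / ((T - cnj a) * (X - a)) - 1)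
       - Ct * Bx * ((T - cnj a) * (X - a) / ((T - a) * (X - cnj a)) - 1)) / (2 * \<i>)"
proof -
  have e: "(T - a) * (X - cnj a) - (T - cnj a) * (X - a) = (a - cnj a) * (T - X)" by algebra
  have "(Bt * Cx * ((T - a) * (X - cnj a) / ((T - cnj a) * (X - a)) - 1)
       - Ct * Bx * ((T - cnj a) * (X - a) / ((T - a) * (X - cnj a)) - 1))
     = Bt * Cx * (((T - a) * (X - cnj a) - (T - cnj a) * (X - a)) / ((T - cnj a) * (X - a)))
       + Ct * Bx * (((T - a) * (X - cnj a) - (T - cnj a) * (X - a)) / ((T - a) * (X - cnj a)))"
  proof -
    have d1: "(T - cnj a) * (X - a) \<noteq> 0" "(T - a) * (X - cnj a) \<noteq> 0" using n1 by auto
    have q: "d \<noteq> 0 \<Longrightarrow> u / d - 1 = (u - d) / d" for u d :: complex by (simp add: field_simps)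
    have E2: "(T - cnj a) * (X - a) - (T - a) * (X - cnj a) = - ((T - a) * (X - cnj a) - (T - cnj a) * (X - a))" by algebra
    show ?thesis unfolding q[OF d1(1)] q[OF d1(2)] E2 mult_minus_right minus_divide_left[symmetric] by simp
  qed
  also have "\<dots> = (2 * \<i>) * ((T - X) * ((s / (T - a)) * Ct * (s / (X - cnj a)) * Bx + (s / (T - cnj a)) * Bt * (s / (X - a)) * Cx))"
    unfolding e ab using n1 s by (simp add: field_simps)
  finally show ?thesis by simp
qed



definition Kern :: "(nat \<Rightarrow> complex) \<Rightarrow> nat \<Rightarrow> real \<Rightarrow> real \<Rightarrow> complex" where
  "Kern a n x t = (\<Sum>k\<in>{- int n..int n - 1}. cnj (Phi a k (of_real t)) * Phi a k (of_real x))"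

definition PP :: "(nat \<Rightarrow> complex) \<Rightarrow> nat \<Rightarrow> real \<Rightarrow> real \<Rightarrow> complex" where
  "PP a n x t = Bplus a n (of_real t) * cnj (Bplus a n (of_real x))"

lemma set_step: "{- int (Suc n)..int (Suc n) - 1} = insert (- (int n + 1)) (insert (int n) {- int n..int n - 1})"
  by auto

lemma Phi_pos: "Phi a (int n) z = Phiplus a n z" by (simp add: Phi_def)
lemma Phi_neg: "Phi a (- (int n + 1)) z = Phiminus a (Suc n) z"
  by (simp add: Phi_def nat_add_distrib)

lemma Kern_CD:
  assumes pos: "\<And>k. Im (a k) > 0"
  shows "of_real (t - x) * Kern a n x t = (PP a n x t - cnj (PP a n x t)) / (2 * \<i>)"
proof (induction n)
  case 0 then show ?case by (simp add: Kern_def PP_def Bplus_def)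
next
  case (Suc n)
  define T where "T = complex_of_real t"
  define X where "X = complex_of_real x"
  define s where "s = complex_of_real (sqrt (Im (a n)))"
  define b where "b = Im (a n)"
  have s2: "s * s = of_real b" using pos[of n] by (simp add: s_def b_def flip: of_real_mult)
  have ab: "a n - cnj (a n) = 2 * \<i> * of_real b" by (simp add: b_def complex_eq_iff)
  have n1: "T - a n \<noteq> 0" "T - cnj (a n) \<noteq> 0" "X - a n \<noteq> 0" "X - cnj (a n) \<noteq> 0"
    using den_nz[OF pos[of n]] by (auto simp: T_def X_def)
  have cs: "cnj s = s" by (simp add: s_def)
  have cT: "cnj T = T" "cnj X = X" by (auto simp: T_def X_def)
  have Kstep: "Kern a (Suc n) x t = Kern a n x t +
     ((s / (T - a n)) * cnj (Bplus a n T) * (s / (X - cnj (a n))) * Bplus a n X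
      + (s / (T - cnj (a n))) * Bplus a n T * (s / (X - a n)) * cnj (Bplus a n X))"
  proof -
    have "Kern a (Suc n) x t = cnj (Phi a (- (int n + 1)) T) * Phi a (- (int n + 1)) X
       + (cnj (Phi a (int n) T) * Phi a (int n) X + Kern a n x t)"
      unfolding Kern_def set_step T_def X_def by (subst sum.insert; auto)+
    also have "\<dots> = Kern a n x t +
     ((s / (T - a n)) * cnj (Bplus a n T) * (s / (X - cnj (a n))) * Bplus a n X
      + (s / (T - cnj (a n))) * Bplus a n T * (s / (X - a n)) * cnj (Bplus a n X))"
      unfolding Phi_pos Phi_neg Phiplus_def Phiminus_def T_def X_def Bminus_eq
      by (simp add: bseq_def s_def algebra_simps)
    finally show ?thesis .
  qed
  have PPs: "PP a (Suc n) x t = Bplus a n T * cnj (Bplus a n X) *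
      ((chi (a n) * cnj (chi (a n))) * ((T - a n) * (X - cnj (a n)) / ((T - cnj (a n)) * (X - a n))))"
    by (simp add: PP_def Bplus_def T_def X_def)
  have cPPs: "cnj (PP a (Suc n) x t) = cnj (Bplus a n T) * Bplus a n X *
      ((chi (a n) * cnj (chi (a n))) * ((T - cnj (a n)) * (X - a n) / ((T - a n) * (X - cnj (a n)))))"
    by (simp add: PP_def Bplus_def T_def X_def)
  have PPn: "PP a n x t = Bplus a n T * cnj (Bplus a n X)" by (simp add: PP_def T_def X_def)
  have TX: "complex_of_real (t - x) = T - X" by (simp add: T_def X_def)
  have cPPn: "cnj (PP a n x t) = cnj (Bplus a n T) * Bplus a n X" by (simp add: PP_def T_def X_def)
  have fin: "(Bt * Cx - Ct * Bx) / (2 * \<i>) + (Bt * Cx * (M - 1) - Ct * Bx * (M' - 1)) / (2 * \<i>)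
     = (Bt * Cx * M - Ct * Bx * M') / (2 * \<i>)" for Bt Cx Ct Bx M M' :: complex
    by (simp add: field_simps)
  have IH': "(T - X) * Kern a n x t = (Bplus a n T * cnj (Bplus a n X) - cnj (Bplus a n T) * Bplus a n X) / (2 * \<i>)"
    using Suc.IH unfolding TX PPn by simp
  have "of_real (t - x) * Kern a (Suc n) x t = (T - X) * Kern a n x t +
      (T - X) * ((s / (T - a n)) * cnj (Bplus a n T) * (s / (X - cnj (a n))) * Bplus a n X
      + (s / (T - cnj (a n))) * Bplus a n T * (s / (X - a n)) * cnj (Bplus a n X))"
    unfolding Kstep TX by (rule distrib_left)
  also have "\<dots> = (Bplus a n T * cnj (Bplus a n X) * ((T - a n) * (X - cnj (a n)) / ((T - cnj (a n)) * (X - a n)))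
       - cnj (Bplus a n T) * Bplus a n X * ((T - cnj (a n)) * (X - a n) / ((T - a n) * (X - cnj (a n))))) / (2 * \<i>)"
    unfolding IH' key_alg[OF s2 ab n1] fin ..
  also have "\<dots> = (PP a (Suc n) x t - cnj (PP a (Suc n) x t)) / (2 * \<i>)"
    by (subst cPPs, subst PPs, simp only: chi_cnj_mult mult_1_left)
  finally show ?case .
qed



definition Aang :: "(nat \<Rightarrow> complex) \<Rightarrow> nat \<Rightarrow> real \<Rightarrow> real" where
  "Aang a n u = (\<Sum>k<n. 2 * arctan ((u - Re (a k)) / Im (a k)))"

lemma factor_exp:
  assumes b: "Im a > 0"
  shows "(complex_of_real u - a) / (complex_of_real u - cnj a) = - exp (\<i> * of_real (2 * arctan ((u - Re a) / Im a)))"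
proof -
  define b where "b = Im a"
  define z where "z = (u - Re a) / b"
  have bp: "b > 0" using b b_def by simp
  have hz: "1 + z\<^sup>2 > 0" by (simp add: add_pos_nonneg)
  have cs: "cos (2 * arctan z) = (1 - z\<^sup>2) / (1 + z\<^sup>2)" "sin (2 * arctan z) = 2 * z / (1 + z\<^sup>2)"
  proof -
    have c1: "(cos (arctan z))\<^sup>2 = 1 / (1 + z\<^sup>2)" using hz by (simp add: cos_arctan power_divide)
    have s1: "(sin (arctan z))\<^sup>2 = z\<^sup>2 / (1 + z\<^sup>2)" using hz by (simp add: sin_arctan power_divide)
    have p: "sin (arctan z) * cos (arctan z) = z / (1 + z\<^sup>2)"
      using hz by (simp add: sin_arctan cos_arctan)
    show "cos (2 * arctan z) = (1 - z\<^sup>2) / (1 + z\<^sup>2)"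
      unfolding cos_double c1 s1 by (simp add: diff_divide_distrib)
    show "sin (2 * arctan z) = 2 * z / (1 + z\<^sup>2)"
      unfolding sin_double mult.assoc p by simp
  qed
  have e: "exp (\<i> * of_real (2 * arctan z)) = Complex ((1 - z\<^sup>2) / (1 + z\<^sup>2)) (2 * z / (1 + z\<^sup>2))"
  proof -
    have "exp (\<i> * of_real (2 * arctan z)) = cis (2 * arctan z)" by (simp only: cis_conv_exp)
    then show ?thesis by (simp add: complex_eq_iff cs)
  qed
  have d: "complex_of_real u - cnj a \<noteq> 0" using den_nz[OF b] by auto
  have uu: "u - Re a = b * z" using bp by (simp add: z_def)
  have "(complex_of_real u - cnj a) * (- exp (\<i> * of_real (2 * arctan z))) = complex_of_real u - a"
  proof -
    have hz': "1 + z\<^sup>2 \<noteq> 0" using hz by simp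
    define p where "p = (1 - z\<^sup>2) / (1 + z\<^sup>2)"
    define q where "q = 2 * z / (1 + z\<^sup>2)"
    have pe: "p * (1 + z\<^sup>2) = 1 - z\<^sup>2" "q * (1 + z\<^sup>2) = 2 * z" using hz' by (simp_all add: p_def q_def)
    have "(q - z * p) * (1 + z\<^sup>2) = q * (1 + z\<^sup>2) - z * (p * (1 + z\<^sup>2))" by (simp add: algebra_simps)
    also have "\<dots> = 2 * z - z * (1 - z\<^sup>2)" unfolding pe ..
    also have "\<dots> = z * (1 + z\<^sup>2)" by (simp add: algebra_simps)
    finally have "(q - z * p) * (1 + z\<^sup>2) = z * (1 + z\<^sup>2)" .
    then have q1: "q - z * p = z" using hz' by simp
    have "(z * q + p) * (1 + z\<^sup>2) = z * (q * (1 + z\<^sup>2)) + p * (1 + z\<^sup>2)" by (simp add: algebra_simps)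
    also have "\<dots> = z * (2 * z) + (1 - z\<^sup>2)" unfolding pe ..
    also have "\<dots> = 1 * (1 + z\<^sup>2)" by (simp add: algebra_simps power2_eq_square)
    finally have "(z * q + p) * (1 + z\<^sup>2) = 1 * (1 + z\<^sup>2)" .
    then have q2: "z * q + p = 1" using hz' by (metis mult_right_cancel)
    have w1: "complex_of_real u - cnj a = Complex (b * z) b" using uu by (simp add: complex_eq_iff b_def)
    have w2: "complex_of_real u - a = Complex (b * z) (- b)" using uu by (simp add: complex_eq_iff b_def)
    have e': "exp (\<i> * of_real (2 * arctan z)) = Complex p q" unfolding e p_def q_def ..
    have r1: "b * z * (- p) - b * (- q) = b * z" using q1 by (simp add: algebra_simps)
    have r2: "b * z * (- q) + b * (- p) = - b" using q2 by (metis mult.assoc distrib_left minus_mult_right mult.right_neutral minus_add_distrib)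
    show ?thesis unfolding e' w1 w2 using r1 r2 by (simp add: complex_eq_iff)
  qed
  then show ?thesis using d by (simp add: z_def b_def field_simps)
qed

lemma Bplus_exp:
  assumes pos: "\<And>k. Im (a k) > 0"
  shows "Bplus a n (of_real u) = (\<Prod>k<n. - chi (a k)) * exp (\<i> * of_real (Aang a n u))"
proof (induction n)
  case 0 then show ?case by (simp add: Bplus_def Aang_def)
next
  case (Suc n)
  have "Bplus a (Suc n) (of_real u) = Bplus a n (of_real u) * (chi (a n) * ((of_real u - a n) / (of_real u - cnj (a n))))"
    by (simp add: Bplus_def)
  also have "\<dots> = (\<Prod>k<Suc n. - chi (a k)) * (exp (\<i> * of_real (Aang a n u)) * exp (\<i> * of_real (2 * arctan ((u - Re (a n)) / Im (a n)))))"
    unfolding Suc factor_exp[OF pos] by simp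
  also have "\<dots> = (\<Prod>k<Suc n. - chi (a k)) * exp (\<i> * of_real (Aang a (Suc n) u))"
    by (simp add: Aang_def exp_add[symmetric] distrib_left)
  finally show ?case .
qed

lemma prod_chi_unit: "(\<Prod>k<(n::nat). - chi (a k)) * cnj (\<Prod>k<n. - chi (a k)) = 1"
  by (induction n) (simp_all add: chi_cnj_mult algebra_simps)

lemma PP_exp:
  assumes pos: "\<And>k. Im (a k) > 0"
  shows "PP a n x t = exp (\<i> * of_real (Aang a n t - Aang a n x))"
proof -
  define C where "C = (\<Prod>k<n. - chi (a k))"
  have "PP a n x t = (C * cnj C) * (exp (\<i> * of_real (Aang a n t)) * exp (- (\<i> * of_real (Aang a n x))))"
    unfolding PP_def Bplus_exp[OF pos] C_def[symmetric] by (simp add: exp_cnj)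
  also have "\<dots> = exp (\<i> * of_real (Aang a n t - Aang a n x))"
    unfolding C_def prod_chi_unit by (simp add: exp_add[symmetric] algebra_simps)
  finally show ?thesis .
qed

lemma Kern_sin:
  assumes pos: "\<And>k. Im (a k) > 0"
  shows "of_real (t - x) * Kern a n x t = of_real (sin (Aang a n t - Aang a n x))"
proof -
  have "cnj (PP a n x t) = exp (- (\<i> * of_real (Aang a n t - Aang a n x)))"
    unfolding PP_exp[OF pos] by (simp add: exp_cnj)
  then show ?thesis unfolding Kern_CD[OF pos] sin_of_real[symmetric] sin_exp_eq
    by (simp add: PP_exp[OF pos])
qed



definition phiD :: "(nat \<Rightarrow> complex) \<Rightarrow> nat \<Rightarrow> real \<Rightarrow> real" where
  "phiD a n u = (\<Sum>k<n. 2 * Im (a k) / ((u - Re (a k))\<^sup>2 + (Im (a k))\<^sup>2))"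

lemma Aang_deriv:
  assumes pos: "\<And>k. Im (a k) > 0"
  shows "(Aang a n has_real_derivative phiD a n u) (at u)"
  unfolding Aang_def[abs_def] phiD_def
proof (rule DERIV_sum)
  fix k assume "k \<in> {..<n}"
  define b where "b = Im (a k)"
  define c where "c = Re (a k)"
  have bp: "b > 0" using pos b_def by simp
  have "((\<lambda>u. 2 * arctan ((u - c) / b)) has_real_derivative 2 * (inverse (1 + ((u - c) / b)\<^sup>2) * (1 / b))) (at u)"
    using bp by (auto intro!: derivative_eq_intros DERIV_arctan[THEN DERIV_chain2])
  moreover have "2 * (inverse (1 + ((u - c) / b)\<^sup>2) * (1 / b)) = 2 * b / ((u - c)\<^sup>2 + b\<^sup>2)"
    using bp by (simp add: field_simps power2_eq_square)
  ultimately show "((\<lambda>u. 2 * arctan ((u - Re (a k)) / Im (a k))) has_real_derivative 2 * Im (a k) / ((u - Re (a k))\<^sup>2 + (Im (a k))\<^sup>2)) (at u)"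
    by (simp add: b_def c_def)
qed

lemma phiD_cont:
  assumes pos: "\<And>k. Im (a k) > 0"
  shows "continuous_on S (phiD a n)"
proof -
  have nz: "(u - Re (a k))\<^sup>2 + (Im (a k))\<^sup>2 \<noteq> 0" for u k
    using pos[of k] by (simp add: sum_power2_eq_zero_iff)
  show ?thesis unfolding phiD_def by (intro continuous_intros) (use nz in auto)
qed

lemma mu_eq:
  assumes pos: "\<And>k. Im (a k) > 0" and y: "y \<noteq> 0"
  shows "y * mu a n y x = Aang a n (x + y) - Aang a n x"
proof -
  have "(LBINT u=ereal x..ereal (x + y). phiD a n u) = Aang a n (x + y) - Aang a n x"
    apply (rule interval_integral_FTC_finite)
     apply (rule phiD_cont[where a=a, OF pos])
    apply (rule has_vector_derivative_at_within)
    using Aang_deriv[where a=a and n=n, OF pos] has_real_derivative_iff_has_vector_derivative by blast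
  then show ?thesis unfolding mu_def phiD_def[symmetric] using y by simp
qed



lemma norm_Bplus: assumes pos: "\<And>k. Im (a k) > 0" shows "norm (Bplus a n (of_real u)) = 1"
proof -
  have "complex_of_real ((norm (Bplus a n (of_real u)))\<^sup>2) = 1"
    unfolding complex_norm_square by (rule Bplus_unit[OF pos])
  then have "(norm (Bplus a n (of_real u)))\<^sup>2 = 1" by (metis of_real_eq_1_iff)
  then show ?thesis using norm_ge_zero[of "Bplus a n (of_real u)"] by (auto simp: power2_eq_1_iff)
qed

lemma norm_Bminus: assumes pos: "\<And>k. Im (a k) > 0" shows "norm (Bminus a m (of_real u)) = 1"
proof (cases m)
  case 0 then show ?thesis by (simp add: Bminus_def)
next
  case (Suc m') then show ?thesis using norm_Bplus[OF pos] by (simp add: Bminus_eq)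
qed

lemma den_bound: assumes "Im a > 0" shows "Im a \<le> norm (complex_of_real u - cnj a)" "Im a \<le> norm (complex_of_real u - a)"
  using abs_Im_le_cmod[of "complex_of_real u - cnj a"] abs_Im_le_cmod[of "complex_of_real u - a"] assms by auto

lemma bseq_simps: "cnj (bseq a m) = a (m - 1)" "- Im (bseq a m) = Im (a (m - 1))"
  by (simp_all add: bseq_def)

lemma Phi_bounded:
  assumes pos: "\<And>k. Im (a k) > 0"
  shows "\<exists>C. \<forall>t. norm (Phi a k (complex_of_real t)) \<le> C"
proof (cases "k \<ge> 0")
  case True
  define m where "m = nat k"
  define b where "b = Im (a m)"
  have bp: "b > 0" using pos b_def by simp
  have "norm (Phi a k (complex_of_real t)) \<le> sqrt b / b" for t
  proof -
    have "norm (Phi a k (complex_of_real t)) = sqrt b / norm (complex_of_real t - cnj (a m))"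
      using True den_nz[OF pos[of m], of t] bp by (simp add: Phi_def Phiplus_def norm_mult norm_divide norm_Bplus[OF pos] m_def b_def)
    also have "\<dots> \<le> sqrt b / b" using den_bound[OF pos[of m], of t] bp
      by (intro divide_left_mono) (auto simp: b_def intro!: mult_pos_pos)
    finally show ?thesis .
  qed
  then show ?thesis by blast
next
  case False
  define m where "m = nat (- k)"
  define b where "b = Im (a (m - 1))"
  have bp: "b > 0" using pos b_def by simp
  have "norm (Phi a k (complex_of_real t)) \<le> sqrt b / b" for t
  proof -
    have "norm (Phi a k (complex_of_real t)) = sqrt b / norm (complex_of_real t - a (m - 1))"
      using False den_nz[OF pos[of "m - 1"], of t] bp by (simp add: Phi_def Phiminus_def norm_mult norm_divide norm_Bminus[OF pos] m_def b_def bseq_simps)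
    also have "\<dots> \<le> sqrt b / b" using den_bound[OF pos[of "m - 1"], of t] bp
      by (intro divide_left_mono) (auto simp: b_def intro!: mult_pos_pos)
    finally show ?thesis .
  qed
  then show ?thesis by blast
qed

lemma Phi_cont:
  assumes pos: "\<And>k. Im (a k) > 0"
  shows "continuous_on UNIV (\<lambda>t. Phi a k (complex_of_real t))"
proof -
  have nz: "complex_of_real t - cnj (a j) \<noteq> 0" "complex_of_real t - a j \<noteq> 0" for t j
    using den_nz[OF pos[of j]] by auto
  have nz2: "complex_of_real t \<noteq> cnj (a j)" "complex_of_real t \<noteq> a j" for t j
    using nz[of t j] by auto
  show ?thesis
  proof (cases "k \<ge> 0")
    case True then show ?thesis
      unfolding Phi_def Phiplus_def Bplus_def
      by (simp, intro continuous_intros) (auto simp: nz nz2)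
  next
    case False then show ?thesis
      unfolding Phi_def Phiminus_def Bminus_def
      by (simp, intro continuous_intros) (auto simp: nz nz2 bseq_simps bseq_def)
  qed
qed



lemma Phi_meas: assumes pos: "\<And>k. Im (a k) > 0"
  shows "(\<lambda>t. Phi a k (complex_of_real t)) \<in> borel_measurable lborel"
  using borel_measurable_continuous_onI[OF Phi_cont[where a=a, OF pos]] by simp

lemma integrable_fPhi:
  assumes pos: "\<And>k. Im (a k) > 0" and f: "integrable lborel f"
  shows "integrable lborel (\<lambda>t. f t * cnj (Phi a k (complex_of_real t)))"
proof -
  obtain C where C: "\<And>t. norm (Phi a k (complex_of_real t)) \<le> C" using Phi_bounded[where a=a, OF pos] by blast
  have fm[measurable]: "f \<in> borel_measurable lborel" using f by (rule borel_measurable_integrable)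
  have pm[measurable]: "(\<lambda>t. Phi a k (complex_of_real t)) \<in> borel_measurable lborel" by (rule Phi_meas[OF pos])
  have i1: "integrable lborel (\<lambda>t. complex_of_real C * f t)" using f by simp
  have "continuous_on UNIV (\<lambda>t. cnj (Phi a k (complex_of_real t)))"
    by (intro continuous_intros Phi_cont[where a=a, OF pos])
  then have [measurable]: "(\<lambda>t. cnj (Phi a k (complex_of_real t))) \<in> borel_measurable lborel"
    using borel_measurable_continuous_onI by simp
  have m1: "(\<lambda>t. f t * cnj (Phi a k (complex_of_real t))) \<in> borel_measurable lborel" by measurable
  have C0: "C \<ge> 0" using C[of 0] by (meson norm_ge_zero order_trans)
  have ae: "AE t in lborel. norm (f t * cnj (Phi a k (complex_of_real t))) \<le> norm (complex_of_real C * f t)"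
  proof (rule AE_I2)
    fix t
    have "norm (f t) * norm (Phi a k (complex_of_real t)) \<le> norm (f t) * C"
      using C[of t] by (intro mult_left_mono) auto
    then show "norm (f t * cnj (Phi a k (complex_of_real t))) \<le> norm (complex_of_real C * f t)"
      using C0 by (simp add: norm_mult mult.commute)
  qed
  show ?thesis by (rule Bochner_Integration.integrable_bound[OF i1 m1 ae])
qed

lemma Sn_Kern:
  assumes pos: "\<And>k. Im (a k) > 0" and f: "integrable lborel f"
  shows "Sn f a n x = complex_of_real (1 / pi) * (\<integral>t. f t * Kern a n x t \<partial>lborel)"
proof -
  have "Sn f a n x = (\<Sum>k\<in>{- int n..int n - 1}. complex_of_real (1 / pi) *
      (\<integral>t. f t * cnj (Phi a k (complex_of_real t)) * Phi a k (complex_of_real x) \<partial>lborel))"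
    unfolding Sn_def coeff_c_def integral_mult_left_zero by (simp add: mult.assoc)
  also have "\<dots> = complex_of_real (1 / pi) * (\<Sum>k\<in>{- int n..int n - 1}.
      (\<integral>t. f t * cnj (Phi a k (complex_of_real t)) * Phi a k (complex_of_real x) \<partial>lborel))"
    by (simp add: sum_distrib_left)
  also have "(\<Sum>k\<in>{- int n..int n - 1}.
      (\<integral>t. f t * cnj (Phi a k (complex_of_real t)) * Phi a k (complex_of_real x) \<partial>lborel))
     = (\<integral>t. (\<Sum>k\<in>{- int n..int n - 1}. f t * cnj (Phi a k (complex_of_real t)) * Phi a k (complex_of_real x)) \<partial>lborel)"
    by (rule Bochner_Integration.integral_sum[where f="\<lambda>k t. f t * cnj (Phi a k (complex_of_real t)) * Phi a k (complex_of_real x)", symmetric])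
       (intro integrable_mult_left integrable_fPhi[OF pos f])
  also have "\<dots> = (\<integral>t. f t * Kern a n x t \<partial>lborel)"
    unfolding Kern_def by (simp add: sum_distrib_left mult.assoc)
  finally show ?thesis .
qed

lemma integrable_Kern:
  assumes pos: "\<And>k. Im (a k) > 0" and f: "integrable lborel f"
  shows "integrable lborel (\<lambda>t. f t * Kern a n x t)"
  unfolding Kern_def sum_distrib_left
  by (rule Bochner_Integration.integrable_sum[where f="\<lambda>k t. f t * (cnj (Phi a k (complex_of_real t)) * Phi a k (complex_of_real x))"], subst mult.assoc[symmetric], rule integrable_mult_left, rule integrable_fPhi[OF pos f])



lemma pw_plus:
  assumes pos: "\<And>k. Im (a k) > 0" and y: "y > 0"
  shows "f (x + y) * Kern a n x (x + y) = (sin (y * mu a n y x) / y) *\<^sub>R f (x + y)"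
proof -
  have "of_real y * Kern a n x (x + y) = of_real (sin (y * mu a n y x))"
    using Kern_sin[where a=a, OF pos, of "x + y" x n] mu_eq[where a=a, OF pos, of y n x] y by simp
  then have "Kern a n x (x + y) = of_real (sin (y * mu a n y x) / y)"
    using y by (simp add: field_simps)
  then show ?thesis by (simp add: scaleR_conv_of_real mult.commute)
qed

lemma pw_minus:
  assumes pos: "\<And>k. Im (a k) > 0" and y: "y > 0"
  shows "f (x - y) * Kern a n x (x - y) = (sin (y * mu a n (- y) x) / y) *\<^sub>R f (x - y)"
proof -
  have m: "(- y) * mu a n (- y) x = Aang a n (x - y) - Aang a n x"
    using mu_eq[where a=a, OF pos, of "- y" n x] y by simp
  have "of_real (- y) * Kern a n x (x - y) = of_real (sin (Aang a n (x - y) - Aang a n x))"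
    using Kern_sin[where a=a, OF pos, of "x - y" x n] by simp
  also have "sin (Aang a n (x - y) - Aang a n x) = - sin (y * mu a n (- y) x)"
    unfolding m[symmetric] by simp
  finally have "of_real (- y) * Kern a n x (x - y) = of_real (- sin (y * mu a n (- y) x))" .
  then have "Kern a n x (x - y) = of_real (sin (y * mu a n (- y) x) / y)"
    using y by (simp add: field_simps)
  then show ?thesis by (simp add: scaleR_conv_of_real mult.commute)
qed

lemma split_integral:
  fixes G :: "real \<Rightarrow> complex"
  assumes G: "integrable lborel G"
  shows "(\<integral>t. G t \<partial>lborel) = (LINT y:{0<..}|lborel. G (x - y)) + (LINT y:{0<..}|lborel. G (x + y))"
proof -
  have Gx: "integrable lborel (\<lambda>y. G (x + y))"
    using lborel_integrable_real_affine[OF G, of 1 x] by simp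
  have Gm: "integrable lborel (\<lambda>y. G (x - y))"
    using lborel_integrable_real_affine[OF G, of "-1" x] by simp
  have "(\<integral>t. G t \<partial>lborel) = (\<integral>y. G (x + y) \<partial>lborel)"
    using lborel_integral_real_affine[of 1 G x] by simp
  also have "\<dots> = (\<integral>y. indicator {0<..} y *\<^sub>R G (x + y) + indicator {..<0} y *\<^sub>R G (x + y) \<partial>lborel)"
  proof (rule integral_cong_AE)
    show "(\<lambda>y. G (x + y)) \<in> borel_measurable lborel" using Gx by (rule borel_measurable_integrable)
    show "(\<lambda>y. indicator {0<..} y *\<^sub>R G (x + y) + indicator {..<0} y *\<^sub>R G (x + y)) \<in> borel_measurable lborel"
      using Gx by (intro borel_measurable_integrable Bochner_Integration.integrable_add integrable_mult_indicator) auto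
    show "AE y in lborel. G (x + y) = indicator {0<..} y *\<^sub>R G (x + y) + indicator {..<0} y *\<^sub>R G (x + y)"
      using AE_lborel_singleton[of 0] by eventually_elim (auto simp: indicator_def)
  qed
  also have "\<dots> = (\<integral>y. indicator {0<..} y *\<^sub>R G (x + y) \<partial>lborel) + (\<integral>y. indicator {..<0} y *\<^sub>R G (x + y) \<partial>lborel)"
    using Gx by (intro Bochner_Integration.integral_add integrable_mult_indicator) auto
  also have "(\<integral>y. indicator {..<0} y *\<^sub>R G (x + y) \<partial>lborel) = (\<integral>y. indicator {0<..} y *\<^sub>R G (x - y) \<partial>lborel)"
    using lborel_integral_real_affine[of "-1" "\<lambda>y. indicator {..<0} y *\<^sub>R G (x + y)" 0]
    by (simp add: indicator_def)
  finally show ?thesis unfolding set_lebesgue_integral_def by simp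
qed

theorem lemma5:
  fixes a :: "nat \<Rightarrow> complex" and f :: "real \<Rightarrow> complex" and n :: nat and x :: real
  assumes "\<And>k. Im (a k) > 0"
    and "integrable lborel f"
  shows "Sn f a n x =
    complex_of_real (1 / pi) *
      (LINT y:{0<..}|lborel. (sin (y * mu a n (- y) x) / y) *\<^sub>R f (x - y))
  + complex_of_real (1 / pi) *
      (LINT y:{0<..}|lborel. (sin (y * mu a n y x) / y) *\<^sub>R f (x + y))"
proof -
  note pos = assms(1)
  have "Sn f a n x = complex_of_real (1 / pi) * (\<integral>t. f t * Kern a n x t \<partial>lborel)"
    by (rule Sn_Kern[OF pos assms(2)])
  also have "(\<integral>t. f t * Kern a n x t \<partial>lborel) =
     (LINT y:{0<..}|lborel. f (x - y) * Kern a n x (x - y)) + (LINT y:{0<..}|lborel. f (x + y) * Kern a n x (x + y))"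
    by (rule split_integral[OF integrable_Kern[OF pos assms(2)]])
  also have "(LINT y:{0<..}|lborel. f (x - y) * Kern a n x (x - y)) = (LINT y:{0<..}|lborel. (sin (y * mu a n (- y) x) / y) *\<^sub>R f (x - y))"
    by (rule set_lebesgue_integral_cong) (auto intro: pw_minus[OF pos])
  also have "(LINT y:{0<..}|lborel. f (x + y) * Kern a n x (x + y)) = (LINT y:{0<..}|lborel. (sin (y * mu a n y x) / y) *\<^sub>R f (x + y))"
    by (rule set_lebesgue_integral_cong) (auto intro: pw_plus[OF pos])
  finally show ?thesis by (simp add: distrib_left)
qed

end
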